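(* Let $X$ be a set and $\tau$ a Hausdorff topology on $I(X)$ making it a topological inverse semigroup. For $A\subseteq X$ let $R_A=\{f\circ 1_A: f\in I(X)\}$ with the subspace topology of $\tau$ and $r_A:I(X)\to R_A$, $r_A(f)=f\circ 1_A$. Suppose $r_A$ is an open map for every cofinite $A\subseteq X$. Let $(f_k)_{k\in\mathbb N}$ be a sequence in $I(X)$ and $f\in I(X)$ such that (i) $f_k\to f$ in $\tau_{pp}$, and (ii) there is a cofinite $A\subseteq X$ with $f_k\circ 1_A\to f\circ 1_A$ in $\tau$. Then $f_k\to f$ in $\tau$.
   Context: $I(X)$ is the set of all bijections $f:B\to C$ with $B,C\subseteq X$ (including the empty map), $\mathrm{dom}(f)=B$, $\mathrm{im}(f)=C$, with composition $\mathrm{dom}(f\circ g)=g^{-1}(\mathrm{dom}(f)\cap\mathrm{im}(g))$ and inversion $f\mapsto f^{-1}$. $1_A$ is the identity map on $A$. For $x,y\in X$: $v(x,y)=\{f: x\in\mathrm{dom}(f), f(x)=y\}$, $w_1(x)=\{f: x\notin\mathrm{dom}(f)\}$, $w_2(y)=\{f: y\notin\mathrm{im}(f)\}$; $\tau_{pp}$ is the topology generated by all these sets. A topological inverse semigroup has continuous multiplication and inversion. *)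

theory Defs
  imports "HOL-Analysis.Analysis"
begin

text \<open>The ground set X is the (arbitrary) type 'a. Partial bijections X to X are
  partial maps 'a to 'a option that are injective on their domain.\<close>

definition IX :: "('a \<rightharpoonup> 'a) set" where
  "IX = {f. inj_on f (dom f)}"

text \<open>Composition f o g (first g, then f): Map.map_comp, so that
  dom (f o g) = g^-1 (dom f inter im g).\<close>
definition pcomp :: "('a \<rightharpoonup> 'a) \<Rightarrow> ('a \<rightharpoonup> 'a) \<Rightarrow> ('a \<rightharpoonup> 'a)" where
  "pcomp f g = f \<circ>\<^sub>m g"

definition pinv :: "('a \<rightharpoonup> 'a) \<Rightarrow> ('a \<rightharpoonup> 'a)" where
  "pinv f = (\<lambda>y. if y \<in> ran f then Some (THE x. f x = Some y) else None)"

definition pid :: "'a set \<Rightarrow> ('a \<rightharpoonup> 'a)" where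
  "pid A = (\<lambda>x. if x \<in> A then Some x else None)"

definition v_set :: "'a \<Rightarrow> 'a \<Rightarrow> ('a \<rightharpoonup> 'a) set" where
  "v_set x y = {f \<in> IX. f x = Some y}"

definition w1_set :: "'a \<Rightarrow> ('a \<rightharpoonup> 'a) set" where
  "w1_set x = {f \<in> IX. x \<notin> dom f}"

definition w2_set :: "'a \<Rightarrow> ('a \<rightharpoonup> 'a) set" where
  "w2_set y = {f \<in> IX. y \<notin> ran f}"

definition tau_pp :: "('a \<rightharpoonup> 'a) topology" where
  "tau_pp = topology_generated_by
     ({v_set x y | x y. True} \<union> {w1_set x | x. True} \<union> {w2_set y | y. True})"

definition topological_inverse_semigroup_on_IX :: "('a \<rightharpoonup> 'a) topology \<Rightarrow> bool" where
  "topological_inverse_semigroup_on_IX T \<longleftrightarrow>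
     topspace T = IX \<and>
     continuous_map (prod_topology T T) T (\<lambda>(f, g). pcomp f g) \<and>
     continuous_map T T pinv"

definition R_set :: "'a set \<Rightarrow> ('a \<rightharpoonup> 'a) set" where
  "R_set A = {pcomp f (pid A) | f. f \<in> IX}"

end

theory Submission
  imports Defs
begin

lemma pcomp_apply: "pcomp f g z = (case g z of None \<Rightarrow> None | Some w \<Rightarrow> f w)"
  by (simp add: pcomp_def map_comp_def)

lemma pid_IX: "pid B \<in> IX"
  by (auto simp: IX_def pid_def inj_on_def split: if_splits)

lemma empty_IX: "Map.empty \<in> IX"
  by (simp add: IX_def)

lemma cont_right:
  assumes "topological_inverse_semigroup_on_IX T" "c \<in> IX"
  shows "continuous_map T T (\<lambda>u. pcomp u c)"
proof -
  have m: "continuous_map (prod_topology T T) T (\<lambda>(f, g). pcomp f g)" and t: "topspace T = IX"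
    using assms(1) by (auto simp: topological_inverse_semigroup_on_IX_def)
  have "continuous_map T (prod_topology T T) (\<lambda>u. (u, c))"
    using assms(2) t by (simp add: continuous_map_paired)
  from continuous_map_compose[OF this m] show ?thesis by (simp add: o_def)
qed

lemma cont_left:
  assumes "topological_inverse_semigroup_on_IX T" "c \<in> IX"
  shows "continuous_map T T (\<lambda>u. pcomp c u)"
proof -
  have m: "continuous_map (prod_topology T T) T (\<lambda>(f, g). pcomp f g)" and t: "topspace T = IX"
    using assms(1) by (auto simp: topological_inverse_semigroup_on_IX_def)
  have "continuous_map T (prod_topology T T) (\<lambda>u. (c, u))"
    using assms(2) t by (simp add: continuous_map_paired)
  from continuous_map_compose[OF this m] show ?thesis by (simp add: o_def)
qed

lemma v_open:
  assumes H: "Hausdorff_space T" and S: "topological_inverse_semigroup_on_IX T"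
  shows "openin T (v_set x y)"
proof -
  have t: "topspace T = IX" using S by (simp add: topological_inverse_semigroup_on_IX_def)
  let ?phi = "\<lambda>u. pcomp (pid {y}) (pcomp u (pid {x}))"
  have c: "continuous_map T T ?phi"
    using continuous_map_compose[OF cont_right[OF S pid_IX] cont_left[OF S pid_IX]]
    by (simp add: o_def)
  have "closedin T {Map.empty}" using closedin_Hausdorff_singleton[OF H] t empty_IX by simp
  then have cl: "closedin T {u \<in> topspace T. ?phi u \<in> {Map.empty}}"
    using closedin_continuous_map_preimage[OF c] by blast
  have eq: "v_set x y = topspace T - {u \<in> topspace T. ?phi u \<in> {Map.empty}}"
  proof -
    have "?phi u = Map.empty \<longleftrightarrow> u x \<noteq> Some y" for u
    proof
      assume "?phi u = Map.empty"
      then have "?phi u x = None" by simp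
      then show "u x \<noteq> Some y" by (auto simp: pcomp_apply pid_def)
    next
      assume "u x \<noteq> Some y"
      then show "?phi u = Map.empty"
        by (auto simp: pcomp_apply pid_def fun_eq_iff split: option.splits)
    qed
    then show ?thesis by (auto simp: v_set_def t)
  qed
  show ?thesis unfolding eq using cl by (simp add: openin_diff)
qed

theorem lemma6p4:
  fixes T :: "('a \<rightharpoonup> 'a) topology"
    and fk :: "nat \<Rightarrow> ('a \<rightharpoonup> 'a)" and f :: "'a \<rightharpoonup> 'a"
  assumes "Hausdorff_space T"
    and "topological_inverse_semigroup_on_IX T"
    and "\<And>A. finite (UNIV - A) \<Longrightarrow>
           open_map T (subtopology T (R_set A)) (\<lambda>g. pcomp g (pid A))"
    and "\<And>k. fk k \<in> IX" and "f \<in> IX"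
    and "limitin tau_pp fk f sequentially"
    and "\<exists>A. finite (UNIV - A) \<and>
           limitin T (\<lambda>k. pcomp (fk k) (pid A)) (pcomp f (pid A)) sequentially"
  shows "limitin T fk f sequentially"
proof -
  note H = assms(1) and S = assms(2)
  have t: "topspace T = IX" using S by (simp add: topological_inverse_semigroup_on_IX_def)
  obtain A where fin: "finite (UNIV - A)"
    and lim: "limitin T (\<lambda>k. pcomp (fk k) (pid A)) (pcomp f (pid A)) sequentially"
    using assms(7) by blast
  define C where "C = UNIV - A"
  define D where "D = C \<inter> dom f"
  define C' where "C' = C - dom f"
  define B where "B = UNIV - C'"
  have finD: "finite D" and finC': "finite C'" using fin by (auto simp: D_def C'_def C_def)
  have E1: "eventually (\<lambda>k. \<forall>x\<in>D. fk k x = f x) sequentially"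
  proof (rule eventually_ball_finite[OF finD], rule ballI)
    fix x assume x: "x \<in> D"
    then obtain y where y: "f x = Some y" by (auto simp: D_def)
    have "openin tau_pp (v_set x y)" unfolding tau_pp_def
      by (rule topology_generated_by_Basis) blast
    moreover have "f \<in> v_set x y" using y assms(5) by (simp add: v_set_def)
    ultimately have "eventually (\<lambda>k. fk k \<in> v_set x y) sequentially"
      using assms(6) by (auto simp: limitin_def)
    then show "eventually (\<lambda>k. fk k x = f x) sequentially"
      by (rule eventually_mono) (simp add: v_set_def y)
  qed
  have E2: "eventually (\<lambda>k. \<forall>x\<in>C'. fk k x = None) sequentially"
  proof (rule eventually_ball_finite[OF finC'], rule ballI)
    fix x assume x: "x \<in> C'"
    have "openin tau_pp (w1_set x)" unfolding tau_pp_def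
      by (rule topology_generated_by_Basis) blast
    moreover have "f \<in> w1_set x" using x assms(5) by (simp add: w1_set_def C'_def)
    ultimately have "eventually (\<lambda>k. fk k \<in> w1_set x) sequentially"
      using assms(6) by (auto simp: limitin_def)
    then show "eventually (\<lambda>k. fk k x = None) sequentially"
      by (rule eventually_mono) (auto simp: w1_set_def)
  qed
  show ?thesis unfolding limitin_def
  proof (intro conjI allI impI)
    show "f \<in> topspace T" using assms(5) t by simp
    fix U assume U: "openin T U \<and> f \<in> U"
    define U2 where "U2 = {u \<in> topspace T. pcomp u (pid B) \<in> U}"
    define V where "V = \<Inter> (insert (topspace T) ((\<lambda>x. v_set x (the (f x))) ` D))"
    define W where "W = U2 \<inter> V"
    have oU2: "openin T U2" unfolding U2_def
      using openin_continuous_map_preimage[OF cont_right[OF S pid_IX] ] U by blast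
    have oV: "openin T V" unfolding V_def
      using finD v_open[OF H S] by (intro openin_Inter) auto
    have oW: "openin T W" unfolding W_def using oU2 oV by blast
    have fB: "pcomp f (pid B) = f"
      by (rule ext) (auto simp: pcomp_apply pid_def B_def C'_def dom_def)
    have fW: "f \<in> W"
      using U assms(5) t fB by (auto simp: W_def U2_def V_def D_def v_set_def)
    have "openin (subtopology T (R_set A)) ((\<lambda>g. pcomp g (pid A)) ` W)"
      using assms(3)[OF fin] oW by (simp add: open_map_def)
    moreover have "pcomp f (pid A) \<in> (\<lambda>g. pcomp g (pid A)) ` W" using fW by blast
    moreover have "limitin (subtopology T (R_set A)) (\<lambda>k. pcomp (fk k) (pid A)) (pcomp f (pid A)) sequentially"
      using lim assms(4,5) by (auto simp: limitin_subtopology R_set_def intro!: always_eventually)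
    ultimately have E3: "eventually (\<lambda>k. pcomp (fk k) (pid A) \<in> (\<lambda>g. pcomp g (pid A)) ` W) sequentially"
      by (auto simp: limitin_def)
    show "eventually (\<lambda>k. fk k \<in> U) sequentially"
      using E1 E2 E3
    proof eventually_elim
      case (elim k)
      from elim(3) obtain u where uW: "u \<in> W" and ue: "pcomp (fk k) (pid A) = pcomp u (pid A)"
        by auto
      have "pcomp u (pid B) = fk k"
      proof
        fix z
        show "pcomp u (pid B) z = fk k z"
        proof (cases "z \<in> C'")
          case True then show ?thesis using elim(2) by (simp add: pcomp_apply pid_def B_def)
        next
          case False
          show ?thesis
          proof (cases "z \<in> A")
            case True
            have "pcomp (fk k) (pid A) z = pcomp u (pid A) z" using ue by simp
            then show ?thesis using True False by (simp add: pcomp_apply pid_def B_def)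
          next
            case zA: False
            then have zD: "z \<in> D" using False by (auto simp: D_def C_def C'_def)
            then have "u \<in> v_set z (the (f z))" using uW by (auto simp: W_def V_def)
            moreover obtain y where "f z = Some y" using zD by (auto simp: D_def)
            ultimately show ?thesis using elim(1) zD False
              by (simp add: pcomp_apply pid_def B_def v_set_def)
          qed
        qed
      qed
      then show ?case using uW by (auto simp: W_def U2_def)
    qed
  qed
qed

end
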